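(* Let $q$ be a prime power and let $1 \le k \le m$ be integers. Then $\Lambda_q(k,m) = \mathcal{A}^G_q(k,m)$; that is, an $\mathbb{F}_{q^m}$-linear subspace $V \subseteq \mathbb{F}_{q^m}^k$ is Frobenius-closed if and only if $\dim_{\mathbb{F}_{q^m}}(V) = \mathrm{maxrk}(V)$.
   Context: For $v=(v_1,\dots,v_k)\in\mathbb{F}_{q^m}^k$, $\mathrm{rk}(v):=\dim_{\mathbb{F}_q}\mathrm{Span}_{\mathbb{F}_q}\{v_1,\dots,v_k\}$. For an $\mathbb{F}_{q^m}$-subspace $C\subseteq \mathbb{F}_{q^m}^k$ (a Gabidulin code), $\mathrm{maxrk}(C):=\max\{\mathrm{rk}(c): c\in C\}$; one always has $\dim_{\mathbb{F}_{q^m}}(C)\le \mathrm{maxrk}(C)$. $\mathcal{A}^G_q(k,m)$ denotes the set of $\mathbb{F}_{q^m}$-subspaces $C\subseteq\mathbb{F}_{q^m}^k$ with $\dim_{\mathbb{F}_{q^m}}(C)=\mathrm{maxrk}(C)$ (optimal Gabidulin anticodes). For $v\in\mathbb{F}_{q^m}^k$ let $v^q:=(v_1^q,\dots,v_k^q)$; a subspace $V\subseteq \mathbb{F}_{q^m}^k$ is Frobenius-closed if $v^q\in V$ for all $v\in V$. $\Lambda_q(k,m)$ denotes the set of Frobenius-closed $\mathbb{F}_{q^m}$-subspaces of $\mathbb{F}_{q^m}^k$ (including the zero space). *)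

theory Defs
  imports "HOL-Analysis.Analysis"
begin

text \<open>Ambient field F_{q^m} is a finite field type 'a with CARD('a) = q^m.
  Vectors in F_{q^m}^k are elements of 'a^'n with CARD('n) = k.\<close>

definition prime_power :: "nat \<Rightarrow> bool" where
  "prime_power q \<longleftrightarrow> (\<exists>p e. prime p \<and> e > 0 \<and> q = p ^ e)"

definition Fq :: "nat \<Rightarrow> 'a::field set" where
  "Fq q = {x. x ^ q = x}"

definition Fq_span :: "nat \<Rightarrow> 'a::field set \<Rightarrow> 'a set" where
  "Fq_span q S = {(\<Sum>b\<in>T. c b * b) | T c. finite T \<and> T \<subseteq> S \<and> (\<forall>b\<in>T. c b \<in> Fq q)}"

definition Fq_indep :: "nat \<Rightarrow> 'a::field set \<Rightarrow> bool" where
  "Fq_indep q B \<longleftrightarrow> (\<forall>T c. finite T \<longrightarrow> T \<subseteq> B \<longrightarrow> (\<forall>b\<in>T. c b \<in> Fq q) \<longrightarrow>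
      (\<Sum>b\<in>T. c b * b) = 0 \<longrightarrow> (\<forall>b\<in>T. c b = 0))"

definition Fq_dim :: "nat \<Rightarrow> 'a::field set \<Rightarrow> nat" where
  "Fq_dim q W = Max {card B | B. finite B \<and> B \<subseteq> W \<and> Fq_indep q B}"

definition rk :: "nat \<Rightarrow> 'a::field ^ 'n \<Rightarrow> nat" where
  "rk q v = Fq_dim q (Fq_span q (range (\<lambda>i. v $ i)))"

definition maxrk :: "nat \<Rightarrow> ('a::field ^ 'n) set \<Rightarrow> nat" where
  "maxrk q C = Max (rk q ` C)"

definition frob :: "nat \<Rightarrow> 'a::field ^ 'n \<Rightarrow> 'a ^ 'n" where
  "frob q v = (\<chi> i. (v $ i) ^ q)"

definition frob_closed :: "nat \<Rightarrow> ('a::field ^ 'n) set \<Rightarrow> bool" where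
  "frob_closed q V \<longleftrightarrow> (\<forall>v\<in>V. frob q v \<in> V)"

end

theory Submission
  imports Defs "HOL-Number_Theory.Residues" "HOL-Computational_Algebra.Polynomial"
begin


locale sf =
  fixes F :: "'a::field set"
  assumes finF: "finite F" and F0: "0 \<in> F" and F1: "1 \<in> F"
    and Fadd: "\<And>x y. x \<in> F \<Longrightarrow> y \<in> F \<Longrightarrow> x + y \<in> F"
    and Fmult: "\<And>x y. x \<in> F \<Longrightarrow> y \<in> F \<Longrightarrow> x * y \<in> F"
    and Fneg: "\<And>x. x \<in> F \<Longrightarrow> - x \<in> F"
    and Finv: "\<And>x. x \<in> F \<Longrightarrow> inverse x \<in> F"
begin

lemma Fdiff: "x \<in> F \<Longrightarrow> y \<in> F \<Longrightarrow> x - y \<in> F"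
  using Fadd Fneg by (metis diff_conv_add_uminus)

lemma Fdiv: "x \<in> F \<Longrightarrow> y \<in> F \<Longrightarrow> x / y \<in> F"
  using Fmult Finv by (metis divide_inverse)

lemma cardF2: "2 \<le> card F"
proof -
  have "{0,1} \<subseteq> F" using F0 F1 by auto
  from card_mono[OF finF this] show ?thesis by simp
qed

definition spanF :: "'b set \<Rightarrow> ('b \<Rightarrow> 'a) \<Rightarrow> 'a set" where
  "spanF I x = {(\<Sum>j\<in>I. c j * x j) | c. \<forall>j\<in>I. c j \<in> F}"

definition indepF :: "'b set \<Rightarrow> ('b \<Rightarrow> 'a) \<Rightarrow> bool" where
  "indepF I x \<longleftrightarrow> (\<forall>c. (\<forall>j\<in>I. c j \<in> F) \<longrightarrow> (\<Sum>j\<in>I. c j * x j) = 0 \<longrightarrow> (\<forall>j\<in>I. c j = 0))"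

lemma span_zero: "0 \<in> spanF I x"
  unfolding spanF_def by (rule CollectI, rule exI[of _ "\<lambda>_. 0"]) (auto simp: F0)

lemma span_add: assumes "a \<in> spanF I x" "b \<in> spanF I x" shows "a + b \<in> spanF I x"
proof -
  from assms obtain c1 c2 where c: "a = (\<Sum>j\<in>I. c1 j * x j)" "\<forall>j\<in>I. c1 j \<in> F"
    "b = (\<Sum>j\<in>I. c2 j * x j)" "\<forall>j\<in>I. c2 j \<in> F" unfolding spanF_def by auto
  have "a + b = (\<Sum>j\<in>I. (c1 j + c2 j) * x j)" using c by (simp add: sum.distrib distrib_right)
  thus ?thesis unfolding spanF_def using c Fadd by auto
qed

lemma span_smult: assumes "a \<in> F" "b \<in> spanF I x" shows "a * b \<in> spanF I x"
proof -
  from assms obtain c where c: "b = (\<Sum>j\<in>I. c j * x j)" "\<forall>j\<in>I. c j \<in> F"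
    unfolding spanF_def by auto
  have "a * b = (\<Sum>j\<in>I. (a * c j) * x j)" using c by (simp add: sum_distrib_left mult.assoc)
  thus ?thesis unfolding spanF_def using c Fmult assms(1) by auto
qed

lemma span_base: assumes "finite I" "j \<in> I" shows "x j \<in> spanF I x"
proof -
  have "(\<Sum>i\<in>I. (if i = j then 1 else 0) * x i) = (\<Sum>i\<in>I. if i = j then x i else 0)"
    by (rule sum.cong) auto
  also have "\<dots> = x j" using assms by simp
  finally have "(\<Sum>i\<in>I. (if i = j then 1 else 0) * x i) = x j" .
  thus ?thesis unfolding spanF_def using F0 F1 by (auto intro!: exI[of _ "\<lambda>i. if i = j then 1 else 0"])
qed

lemma span_sum: "finite T \<Longrightarrow> (\<forall>t\<in>T. f t \<in> spanF I x) \<Longrightarrow> sum f T \<in> spanF I x"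
  by (induction T rule: finite_induct) (auto simp: span_zero span_add)

lemma span_image: "spanF I x = (\<lambda>c. \<Sum>j\<in>I. c j * x j) ` (PiE I (\<lambda>_. F))"
proof
  show "spanF I x \<subseteq> (\<lambda>c. \<Sum>j\<in>I. c j * x j) ` (PiE I (\<lambda>_. F))"
  proof
    fix a assume "a \<in> spanF I x"
    then obtain c where c: "a = (\<Sum>j\<in>I. c j * x j)" "\<forall>j\<in>I. c j \<in> F" unfolding spanF_def by auto
    have "a = (\<Sum>j\<in>I. restrict c I j * x j)" using c by simp
    moreover have "restrict c I \<in> PiE I (\<lambda>_. F)" using c by auto
    ultimately show "a \<in> (\<lambda>c. \<Sum>j\<in>I. c j * x j) ` (PiE I (\<lambda>_. F))" by blast
  qed
next
  show "(\<lambda>c. \<Sum>j\<in>I. c j * x j) ` (PiE I (\<lambda>_. F)) \<subseteq> spanF I x"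
  proof
    fix a assume "a \<in> (\<lambda>c. \<Sum>j\<in>I. c j * x j) ` (PiE I (\<lambda>_. F))"
    then obtain c where "c \<in> PiE I (\<lambda>_. F)" "a = (\<Sum>j\<in>I. c j * x j)" by blast
    thus "a \<in> spanF I x" unfolding spanF_def by (auto simp: PiE_iff)
  qed
qed

lemma finite_span: "finite I \<Longrightarrow> finite (spanF I x)"
  unfolding span_image using finF by (intro finite_imageI finite_PiE) auto

lemma card_span_le: "finite I \<Longrightarrow> card (spanF I x) \<le> card F ^ card I"
proof -
  assume I: "finite I"
  have "card (spanF I x) \<le> card (PiE I (\<lambda>_. F))"
    unfolding span_image by (rule card_image_le) (use I finF in \<open>auto intro: finite_PiE\<close>)
  also have "\<dots> = card F ^ card I" using I by (simp add: card_PiE)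
  finally show ?thesis .
qed

lemma card_span_indep: assumes I: "finite I" and ind: "indepF I x"
  shows "card (spanF I x) = card F ^ card I"
proof -
  have "inj_on (\<lambda>c. \<Sum>j\<in>I. c j * x j) (PiE I (\<lambda>_. F))"
  proof (rule inj_onI)
    fix c c' assume c: "c \<in> PiE I (\<lambda>_. F)" and c': "c' \<in> PiE I (\<lambda>_. F)"
      and eq: "(\<Sum>j\<in>I. c j * x j) = (\<Sum>j\<in>I. c' j * x j)"
    have "(\<Sum>j\<in>I. (c j - c' j) * x j) = 0" using eq
      by (simp add: left_diff_distrib sum_subtractf)
    moreover have "\<forall>j\<in>I. c j - c' j \<in> F" using c c' Fdiff by auto
    ultimately have "\<forall>j\<in>I. c j - c' j = 0" using ind[unfolded indepF_def, THEN spec, of "\<lambda>j. c j - c' j"] by simp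
    thus "c = c'" by (intro PiE_ext[OF c c']) simp
  qed
  hence "card (spanF I x) = card (PiE I (\<lambda>_. F))" unfolding span_image by (rule card_image)
  also have "\<dots> = card F ^ card I" using I by (simp add: card_PiE)
  finally show ?thesis .
qed

lemma span_subset: assumes "y ` J \<subseteq> spanF I x" "finite J" shows "spanF J y \<subseteq> spanF I x"
proof
  fix a assume "a \<in> spanF J y"
  then obtain c where c: "a = (\<Sum>j\<in>J. c j * y j)" "\<forall>j\<in>J. c j \<in> F" unfolding spanF_def by auto
  show "a \<in> spanF I x" unfolding c(1) using assms c(2) by (intro span_sum) (auto intro!: span_smult)
qed

lemma indep_le: assumes "finite I" "finite J" "indepF J y" "y ` J \<subseteq> spanF I x"
  shows "card J \<le> card I"
proof -
  have "card F ^ card J = card (spanF J y)" using card_span_indep[OF assms(2,3)] by simp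
  also have "\<dots> \<le> card (spanF I x)"
    using span_subset[OF assms(4,2)] finite_span[OF assms(1)] by (rule card_mono[rotated])
  also have "\<dots> \<le> card F ^ card I" using card_span_le[OF assms(1)] by simp
  finally have le: "card F ^ card J \<le> card F ^ card I" .
  have "1 < card F" using cardF2 by simp
  from power_le_imp_le_exp[OF this le] show ?thesis .
qed

lemma indep_insert: assumes I: "finite I" "j \<notin> I" and ind: "indepF I x" and y: "y \<notin> spanF I x"
  shows "indepF (insert j I) (x(j := y))"
  unfolding indepF_def
proof (intro allI impI ballI)
  fix c k assume cF: "\<forall>i\<in>insert j I. c i \<in> F" and s: "(\<Sum>i\<in>insert j I. c i * (x(j := y)) i) = 0"
    and k: "k \<in> insert j I"
  have s2: "(\<Sum>i\<in>insert j I. c i * (x(j := y)) i) = c j * y + (\<Sum>i\<in>I. c i * x i)"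
  proof -
    have "(\<Sum>i\<in>insert j I. c i * (x(j := y)) i) = c j * (x(j := y)) j + (\<Sum>i\<in>I. c i * (x(j := y)) i)"
      by (rule sum.insert[OF I])
    also have "(\<Sum>i\<in>I. c i * (x(j := y)) i) = (\<Sum>i\<in>I. c i * x i)"
      by (rule sum.cong) (use I in auto)
    finally show ?thesis by simp
  qed
  have cj: "c j = 0"
  proof (rule ccontr)
    assume nz: "c j \<noteq> 0"
    define S where "S = (\<Sum>i\<in>I. c i * x i)"
    have "c j * y + S = 0" using s s2 S_def by simp
    hence "c j * y = - S" by (simp add: eq_neg_iff_add_eq_0)
    hence y1: "y = - S / c j" using nz by (metis nonzero_mult_div_cancel_left)
    have "(\<Sum>i\<in>I. (- c i / c j) * x i) = (\<Sum>i\<in>I. - (c i * x i) / c j)"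
      by (rule sum.cong) (auto simp: field_simps)
    also have "\<dots> = - S / c j" unfolding S_def by (simp add: sum_divide_distrib[symmetric] sum_negf)
    finally have "y = (\<Sum>i\<in>I. (- c i / c j) * x i)" using y1 by simp
    moreover have "\<forall>i\<in>I. - c i / c j \<in> F" using cF Fdiv Fneg by auto
    ultimately have "y \<in> spanF I x" unfolding spanF_def
      by (intro CollectI exI[of _ "\<lambda>i. - c i / c j"] conjI) auto
    with y show False by simp
  qed
  hence "(\<Sum>i\<in>I. c i * x i) = 0" using s s2 by simp
  hence "\<forall>i\<in>I. c i = 0" using ind cF unfolding indepF_def by auto
  thus "c k = 0" using k cj by auto
qed

lemma indep_inj: assumes I: "finite I" and ind: "indepF I x" shows "inj_on x I"
proof (rule inj_onI, rule ccontr)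
  fix i j assume ij: "i \<in> I" "j \<in> I" "x i = x j" "i \<noteq> j"
  define c where "c k = (if k = i then 1 else if k = j then -1 else (0::'a))" for k
  have "(\<Sum>k\<in>I. c k * x k) = (\<Sum>k\<in>I. (if k = i then x k else 0) - (if k = j then x k else 0))"
    using ij by (intro sum.cong) (auto simp: c_def)
  also have "\<dots> = 0" using ij I by (simp add: sum_subtractf)
  finally have s: "(\<Sum>k\<in>I. c k * x k) = 0" .
  have cF: "\<forall>k\<in>I. c k \<in> F" by (auto simp: c_def F0 F1 Fneg)
  have "c i = 0" using ind s cF ij unfolding indepF_def by blast
  thus False by (simp add: c_def)
qed

lemma exists_indep: assumes "finite I" "card F ^ card I \<le> CARD('a)" "finite (UNIV :: 'a set)"
  shows "\<exists>x. indepF I x"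
  using assms(1,2)
proof (induction I rule: finite_induct)
  case empty then show ?case by (auto simp: indepF_def)
next
  case (insert j I)
  have lt: "card F ^ card I < card F ^ card (insert j I)"
    using insert cardF2 by (intro power_strict_increasing) auto
  have "card F ^ card I \<le> CARD('a)" using lt insert(4) by linarith
  then obtain x where x: "indepF I x" using insert.IH by auto
  have "card (spanF I x) < CARD('a)" using card_span_le[OF insert(1), of x] lt insert(4) by linarith
  hence "spanF I x \<noteq> UNIV" by (metis less_irrefl)
  then obtain y where "y \<notin> spanF I x" by auto
  hence "indepF (insert j I) (x(j := y))" by (rule indep_insert[OF insert(1,2) x])
  then show ?case by (intro exI[of _ "x(j := y)"])
qed

end



lemma field_facts:
  fixes q m :: nat
  assumes pp: "prime_power q" and card: "CARD('a::{finite,field}) = q ^ m"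
  shows "2 \<le> q" and "\<And>x y::'a. (x + y) ^ q = x ^ q + y ^ q" and "card (Fq q :: 'a set) \<le> q"
proof -
  obtain p e where p: "prime p" "e > 0" "q = p ^ e" using pp unfolding prime_power_def by blast
  have "2 \<le> p" using p(1) prime_ge_2_nat by blast
  also have "p \<le> p ^ e" using p(1,2) prime_gt_0_nat[OF p(1)] by (simp add: self_le_power)
  finally show q2: "2 \<le> q" using p(3) by simp
  have cpos: "CHAR('a) > 0" by (rule finite_imp_CHAR_pos) simp
  have cpr: "prime CHAR('a)" by (rule prime_CHAR_semidom[OF cpos])
  have "CHAR('a) dvd card (UNIV :: 'a set)" by (rule CHAR_dvd_CARD)
  hence "CHAR('a) dvd p ^ (e * m)" using card p(3) by (simp add: power_mult)
  hence "CHAR('a) dvd p" using cpr prime_dvd_power by blast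
  hence cp: "CHAR('a) = p" using cpr p(1) primes_dvd_imp_eq by blast
  show "\<And>x y::'a. (x + y) ^ q = x ^ q + y ^ q"
    by (rule freshmans_dream') (use cpr cp p(3) in auto)
  define P :: "'a poly" where "P = Polynomial.monom 1 q - [:0, 1:]"
  have polyP: "poly P x = x ^ q - x" for x by (simp add: P_def poly_monom)
  have "Polynomial.coeff P q = 1" using q2 by (auto simp: P_def coeff_pCons split: nat.splits)
  hence P0: "P \<noteq> 0" by auto
  have "degree P \<le> q" unfolding P_def
    by (rule degree_diff_le) (use q2 in \<open>auto intro: degree_monom_le simp: degree_pCons_eq_if\<close>)
  moreover have "Fq q = {x. poly P x = (0::'a)}" by (auto simp: Fq_def polyP)
  ultimately show "card (Fq q :: 'a set) \<le> q" using card_poly_roots_bound[OF P0] by simp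
qed

lemma sf_Fq:
  fixes q :: nat
  assumes q: "1 \<le> q" and add: "\<And>x y::'a::{finite,field}. (x + y) ^ q = x ^ q + y ^ q"
  shows "sf (Fq q :: 'a set)"
proof
  show "finite (Fq q :: 'a set)" by simp
  show "0 \<in> (Fq q :: 'a set)" using q by (simp add: Fq_def)
  show "1 \<in> (Fq q :: 'a set)" by (simp add: Fq_def)
  fix x y :: 'a
  show "x \<in> Fq q \<Longrightarrow> y \<in> Fq q \<Longrightarrow> x + y \<in> Fq q" using add by (simp add: Fq_def)
  show "x \<in> Fq q \<Longrightarrow> y \<in> Fq q \<Longrightarrow> x * y \<in> Fq q" by (simp add: Fq_def power_mult_distrib)
  show "x \<in> Fq q \<Longrightarrow> inverse x \<in> Fq q" by (simp add: Fq_def power_inverse)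
  assume "x \<in> Fq q"
  hence "x ^ q = x" by (simp add: Fq_def)
  moreover have "(x + - x) ^ q = x ^ q + (- x) ^ q" by (rule add)
  ultimately have "x + (- x) ^ q = 0" using q by (simp add: power_0_left)
  hence "(- x) ^ q = - x" by (rule minus_unique[symmetric])
  thus "- x \<in> Fq q" by (simp add: Fq_def)
qed

context sf
begin

lemma Fq_dim_le:
  assumes FF: "F = Fq q" and I: "finite I" and S: "S \<subseteq> spanF I x"
    and fin: "finite (UNIV :: 'a set)"
  shows "Fq_dim q (Fq_span q S) \<le> card I"
proof -
  have sub: "Fq_span q S \<subseteq> spanF I x"
  proof
    fix a assume "a \<in> Fq_span q S"
    then obtain T c where a: "a = (\<Sum>b\<in>T. c b * b)" "finite T" "T \<subseteq> S" "\<forall>b\<in>T. c b \<in> F"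
      unfolding Fq_span_def FF by blast
    show "a \<in> spanF I x" unfolding a(1) using a S by (intro span_sum) (auto intro!: span_smult)
  qed
  let ?M = "{card B | B. finite B \<and> B \<subseteq> Fq_span q S \<and> Fq_indep q B}"
  have finM: "finite ?M"
  proof (rule finite_subset)
    show "?M \<subseteq> {..card (UNIV :: 'a set)}" using fin by (auto intro: card_mono)
  qed simp
  have neM: "?M \<noteq> {}" by (auto simp: Fq_indep_def intro!: exI[of _ "{}"])
  have "\<forall>n\<in>?M. n \<le> card I"
  proof
    fix n assume "n \<in> ?M"
    hence "\<exists>B. n = card B \<and> finite B \<and> B \<subseteq> Fq_span q S \<and> Fq_indep q B" by (simp only: mem_Collect_eq)
    then obtain B where B: "n = card B" "finite B" "B \<subseteq> Fq_span q S" "Fq_indep q B" by blast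
    have "indepF B id" unfolding indepF_def id_apply
    proof (intro allI impI)
      fix c assume h: "\<forall>j\<in>B. c j \<in> F" "(\<Sum>j\<in>B. c j * j) = 0"
      show "\<forall>j\<in>B. c j = 0"
        using B(4)[unfolded Fq_indep_def, rule_format, of B c] B(2) h FF by blast
    qed
    moreover have "id ` B \<subseteq> spanF I x" using B(3) sub by auto
    ultimately show "n \<le> card I" using indep_le[OF I B(2)] B(1) by blast
  qed
  thus ?thesis unfolding Fq_dim_def using finM neM by simp
qed


lemma Fq_dim_ge:
  assumes FF: "F = Fq q" and I: "finite I" and ind: "indepF I x" and S: "x ` I \<subseteq> S"
    and fin: "finite (UNIV :: 'a set)"
  shows "card I \<le> Fq_dim q (Fq_span q S)"
proof -
  let ?M = "{card B | B. finite B \<and> B \<subseteq> Fq_span q S \<and> Fq_indep q B}"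
  have finM: "finite ?M"
  proof (rule finite_subset)
    show "?M \<subseteq> {..card (UNIV :: 'a set)}" using fin by (auto intro: card_mono)
  qed simp
  have inj: "inj_on x I" by (rule indep_inj[OF I ind])
  have sub: "x ` I \<subseteq> Fq_span q S"
  proof
    fix b assume "b \<in> x ` I"
    hence "b \<in> S" using S by auto
    moreover have "b = (\<Sum>t\<in>{b}. 1 * t)" by simp
    moreover have "(1::'a) \<in> Fq q" by (simp add: Fq_def)
    ultimately show "b \<in> Fq_span q S" unfolding Fq_span_def
      by (intro CollectI exI[of _ "{b}"] exI[of _ "\<lambda>_. 1"]) auto
  qed
  have indB: "Fq_indep q (x ` I)"
    unfolding Fq_indep_def
  proof (intro allI impI ballI)
    fix T c b assume T: "finite T" "T \<subseteq> x ` I" and cF: "\<forall>b\<in>T. c b \<in> Fq q"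
      and s: "(\<Sum>b\<in>T. c b * b) = 0" and b: "b \<in> T"
    define c' where "c' k = (if x k \<in> T then c (x k) else 0)" for k
    have "(\<Sum>k\<in>I. c' k * x k) = (\<Sum>k\<in>I. if x k \<in> T then c (x k) * x k else 0)"
      by (rule sum.cong) (auto simp: c'_def)
    also have "\<dots> = (\<Sum>k\<in>{k\<in>I. x k \<in> T}. c (x k) * x k)"
      by (rule sum.inter_filter[OF I, symmetric])
    also have "\<dots> = (\<Sum>b\<in>x ` {k\<in>I. x k \<in> T}. c b * b)"
      by (rule sum.reindex[symmetric, unfolded comp_def]) (rule inj_on_subset[OF inj], auto)
    also have "x ` {k\<in>I. x k \<in> T} = T" using T(2) by auto
    finally have "(\<Sum>k\<in>I. c' k * x k) = 0" using s by simp
    moreover have "\<forall>k\<in>I. c' k \<in> F" using cF FF F0 by (auto simp: c'_def)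
    ultimately have z: "\<forall>k\<in>I. c' k = 0" using ind unfolding indepF_def by blast
    obtain k where "k \<in> I" "b = x k" using b T(2) by auto
    thus "c b = 0" using z b by (auto simp: c'_def)
  qed
  have "card (x ` I) \<in> ?M" using sub indB I by blast
  hence "card (x ` I) \<le> Fq_dim q (Fq_span q S)" unfolding Fq_dim_def using finM by simp
  thus ?thesis using card_image[OF inj] by simp
qed

end



lemma pivot_basis:
  fixes V :: "('a::field ^ 'n) set"
  assumes V: "vec.subspace V"
  shows "\<exists>P b. (\<forall>i\<in>P. b i \<in> V) \<and> (\<forall>i\<in>P. \<forall>j\<in>P. b i $ j = (if i = j then 1 else 0))
           \<and> (\<forall>v\<in>V. v = (\<Sum>i\<in>P. (v $ i) *s b i))"
proof -
  define Z where "Z P \<longleftrightarrow> (\<forall>v\<in>V. (\<forall>i\<in>P. v $ i = 0) \<longrightarrow> v = 0)" for P :: "'n set"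
  have "Z UNIV" by (auto simp: Z_def vec_eq_iff)
  then obtain P where P: "Z P" and Pmin: "\<And>P'. Z P' \<Longrightarrow> card P \<le> card P'"
    using ex_has_least_nat[of Z UNIV card] by blast
  have nz: "\<exists>v\<in>V. (\<forall>j\<in>P - {i}. v $ j = 0) \<and> v $ i \<noteq> 0" if i: "i \<in> P" for i
  proof -
    have "card (P - {i}) < card P" by (rule card_Diff1_less) (use i in auto)
    hence "\<not> Z (P - {i})" using Pmin by force
    then obtain v where v: "v \<in> V" "\<forall>j\<in>P-{i}. v $ j = 0" "v \<noteq> 0" unfolding Z_def by blast
    have "v $ i \<noteq> 0"
    proof
      assume "v $ i = 0"
      hence "\<forall>j\<in>P. v $ j = 0" using v(2) by auto
      thus False using P v unfolding Z_def by blast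
    qed
    thus ?thesis using v by blast
  qed
  define w where "w i = (SOME v. v \<in> V \<and> (\<forall>j\<in>P - {i}. v $ j = 0) \<and> v $ i \<noteq> 0)" for i
  have w: "w i \<in> V \<and> (\<forall>j\<in>P - {i}. w i $ j = 0) \<and> w i $ i \<noteq> 0" if "i \<in> P" for i
    unfolding w_def by (rule someI_ex) (use nz[OF that] in blast)
  define b where "b i = inverse (w i $ i) *s w i" for i
  have bV: "\<forall>i\<in>P. b i \<in> V" using w V by (auto simp: b_def intro: vec.subspace_scale)
  have bd: "\<forall>i\<in>P. \<forall>j\<in>P. b i $ j = (if i = j then 1 else 0)" using w by (auto simp: b_def)
  have "\<forall>v\<in>V. v = (\<Sum>i\<in>P. (v $ i) *s b i)"
  proof
    fix v assume v: "v \<in> V"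
    define u where "u = v - (\<Sum>i\<in>P. (v $ i) *s b i)"
    have "u \<in> V" unfolding u_def using v bV V
      by (intro vec.subspace_diff vec.subspace_sum) (auto intro: vec.subspace_scale)
    moreover have "\<forall>j\<in>P. u $ j = 0"
    proof
      fix j assume j: "j \<in> P"
      have "(\<Sum>i\<in>P. (v $ i) *s b i) $ j = (\<Sum>i\<in>P. v $ i * b i $ j)" by simp
      also have "\<dots> = (\<Sum>i\<in>P. if i = j then v $ i else 0)" using bd j by (intro sum.cong) auto
      also have "\<dots> = v $ j" using j by simp
      finally show "u $ j = 0" by (simp add: u_def)
    qed
    ultimately have "u = 0" using P unfolding Z_def by blast
    thus "v = (\<Sum>i\<in>P. (v $ i) *s b i)" by (simp add: u_def)
  qed
  thus ?thesis using bV bd by blast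
qed

lemma dim_pivot:
  fixes V :: "('a::field ^ 'n) set"
  assumes V: "vec.subspace V" and bV: "\<forall>i\<in>P. b i \<in> V"
    and bd: "\<forall>i\<in>P. \<forall>j\<in>P. b i $ j = (if i = j then 1 else 0)"
    and sp: "\<forall>v\<in>V. v = (\<Sum>i\<in>P. (v $ i) *s b i)"
  shows "vec.dim V = card P"
proof -
  have inj: "inj_on b P"
  proof (rule inj_onI)
    fix i j assume ij: "i \<in> P" "j \<in> P" "b i = b j"
    have "b i $ i = 1" using ij(1) bd by simp
    hence "b j $ i = 1" using ij(3) by simp
    moreover have "b j $ i = (if j = i then 1 else 0)" using ij bd by blast
    ultimately show "i = j" by (metis zero_neq_one)
  qed
  have ind: "vec.independent (b ` P)"
  proof (rule vec.independent_if_scalars_zero)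
    show "finite (b ` P)" by simp
    fix f x assume s: "(\<Sum>x\<in>b ` P. f x *s x) = 0" and x: "x \<in> b ` P"
    then obtain i where i: "i \<in> P" "x = b i" by auto
    have "(\<Sum>x\<in>b ` P. f x *s x) = (\<Sum>k\<in>P. f (b k) *s b k)"
      using sum.reindex[OF inj, of "\<lambda>x. f x *s x"] by simp
    hence "(\<Sum>k\<in>P. f (b k) *s b k) $ i = 0" using s by simp
    moreover have "(\<Sum>k\<in>P. f (b k) *s b k) $ i = f (b i)"
    proof -
      have "(\<Sum>k\<in>P. f (b k) *s b k) $ i = (\<Sum>k\<in>P. f (b k) * b k $ i)" by simp
      also have "\<dots> = (\<Sum>k\<in>P. if k = i then f (b k) else 0)" using bd i by (intro sum.cong) auto
      also have "\<dots> = f (b i)" using i by simp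
      finally show ?thesis .
    qed
    ultimately show "f x = 0" using i by simp
  qed
  have sub: "b ` P \<subseteq> V" using bV by auto
  have sp2: "V \<subseteq> vec.span (b ` P)"
  proof
    fix v assume v: "v \<in> V"
    have "(\<Sum>i\<in>P. (v $ i) *s b i) \<in> vec.span (b ` P)"
      by (intro vec.span_sum vec.span_scale vec.span_base) auto
    thus "v \<in> vec.span (b ` P)" using sp v by simp
  qed
  have "vec.dim V = card (b ` P)" by (rule vec.dim_unique[OF sub sp2 ind refl])
  thus ?thesis using card_image[OF inj] by simp
qed


theorem theorem3p11:
  fixes q m :: nat
    and V :: "('a::{finite,field} ^ 'n) set"
  assumes "prime_power q"
    and "CARD('a) = q ^ m"
    and "1 \<le> CARD('n)" and "CARD('n) \<le> m"
    and "vec.subspace V"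
  shows "frob_closed q V \<longleftrightarrow> vec.dim V = maxrk q V"
proof -
  let ?F = "Fq q :: 'a set"
  have q2: "2 \<le> q" and frob: "\<And>x y::'a. (x + y) ^ q = x ^ q + y ^ q" and cardF: "card ?F \<le> q"
    using field_facts[OF assms(1,2)] by auto
  interpret sf ?F by (rule sf_Fq) (use q2 frob in auto)
  have finA: "finite (UNIV :: 'a set)" by simp
  have V: "vec.subspace V" by (rule assms(5))
  obtain P b where bV: "\<forall>i\<in>P. b i \<in> V" and bd: "\<forall>i\<in>P. \<forall>j\<in>P. b i $ j = (if i = j then 1 else 0)"
    and sp: "\<forall>v\<in>V. v = (\<Sum>i\<in>P. (v $ i) *s b i)"
    using pivot_basis[OF V] by blast
  have dimV: "vec.dim V = card P" by (rule dim_pivot[OF V bV bd sp])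
  have finP: "finite P" by simp
  have dn: "card P \<le> CARD('n)" by (rule card_mono) auto
  define d where "d = card P"
  define comb where "comb x = (\<Sum>i\<in>P. x i *s b i)" for x :: "'n \<Rightarrow> 'a"
  have combV: "comb x \<in> V" for x
    unfolding comb_def using bV V by (intro vec.subspace_sum) (auto intro: vec.subspace_scale)
  have comb_comp: "comb x $ j = (\<Sum>i\<in>P. x i * b i $ j)" for x j by (simp add: comb_def)
  have comb_piv: "comb x $ j = x j" if j: "j \<in> P" for x j
  proof -
    have "comb x $ j = (\<Sum>i\<in>P. if i = j then x i else 0)"
      unfolding comb_comp using bd j by (intro sum.cong) auto
    also have "\<dots> = x j" using j by simp
    finally show ?thesis .
  qed
  have coord: "v $ j = (\<Sum>i\<in>P. v $ i * b i $ j)" if "v \<in> V" for v j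
  proof -
    have "v = comb (\<lambda>i. v $ i)" using sp that by (simp add: comb_def)
    hence "v $ j = comb (\<lambda>i. v $ i) $ j" by simp
    thus ?thesis by (simp add: comb_comp)
  qed
  have finV: "finite V" by simp
  have V0: "0 \<in> V" by (rule vec.subspace_0[OF V])
  have maxge: "rk q v \<le> maxrk q V" if "v \<in> V" for v
    unfolding maxrk_def using finV that by (intro Max_ge) auto
  have powle: "card ?F ^ k \<le> CARD('a)" if "k \<le> m" for k
  proof -
    have "card ?F ^ k \<le> q ^ k" using cardF by (rule power_mono) simp
    also have "\<dots> \<le> q ^ m" using q2 that by (intro power_increasing) auto
    finally show ?thesis using assms(2) by simp
  qed
  have dm: "d \<le> m" using dn assms(4) d_def by simp
  have lowrk: "d \<le> maxrk q V"
  proof -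
    obtain x where x: "indepF P x" using exists_indep[OF finP powle finA] dm d_def by blast
    have img: "x ` P \<subseteq> range (\<lambda>i. comb x $ i)"
    proof
      fix a assume "a \<in> x ` P"
      then obtain j where "j \<in> P" "a = x j" by auto
      hence "a = comb x $ j" using comb_piv by simp
      thus "a \<in> range (\<lambda>i. comb x $ i)" by simp
    qed
    have "card P \<le> rk q (comb x)" unfolding rk_def by (rule Fq_dim_ge[OF refl finP x img finA])
    also have "\<dots> \<le> maxrk q V" by (rule maxge[OF combV])
    finally show ?thesis using d_def by simp
  qed
  have q0: "0 < q" using q2 by simp
  have frob_comp: "frob q v $ j = (v $ j) ^ q" for v :: "'a ^ 'n" and j by (simp add: frob_def)
  show ?thesis
  proof
    assume fc: "frob_closed q V"
    have inF: "b i $ j \<in> ?F" if i: "i \<in> P" for i j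
    proof -
      have fV: "frob q (b i) \<in> V" using fc bV i unfolding frob_closed_def by blast
      define u where "u = frob q (b i) - b i"
      have uV: "u \<in> V" unfolding u_def using fV bV i V by (intro vec.subspace_diff) auto
      have "\<forall>k\<in>P. u $ k = 0"
      proof
        fix k assume k: "k \<in> P"
        have "u $ k = (b i $ k) ^ q - b i $ k" by (simp add: u_def frob_comp)
        also have "\<dots> = 0" using bd i k q0 by (simp add: power_0_left)
        finally show "u $ k = 0" .
      qed
      hence "(\<Sum>k\<in>P. (u $ k) *s b k) = 0" by simp
      moreover have "u = (\<Sum>k\<in>P. (u $ k) *s b k)" using sp uV by blast
      ultimately have "u = 0" by simp
      hence "(b i $ j) ^ q = b i $ j" using frob_comp[of "b i" j] by (simp add: u_def)
      thus ?thesis by (simp add: Fq_def)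
    qed
    have "maxrk q V \<le> d"
      unfolding maxrk_def
    proof (rule Max.boundedI)
      show "finite (rk q ` V)" using finV by simp
      show "rk q ` V \<noteq> {}" using V0 by auto
      fix r assume "r \<in> rk q ` V"
      then obtain v where v: "v \<in> V" "r = rk q v" by auto
      have "range (\<lambda>j. v $ j) \<subseteq> spanF P (\<lambda>i. v $ i)"
      proof
        fix a assume "a \<in> range (\<lambda>j. v $ j)"
        then obtain j where j: "a = v $ j" by auto
        have "a = (\<Sum>i\<in>P. b i $ j * v $ i)" using coord[OF v(1), of j] j by (simp add: mult.commute)
        thus "a \<in> spanF P (\<lambda>i. v $ i)" unfolding spanF_def using inF
          by (intro CollectI exI[of _ "\<lambda>i. b i $ j"] conjI) auto
      qed
      hence "rk q v \<le> card P" unfolding rk_def by (rule Fq_dim_le[OF refl finP _ finA])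
      thus "r \<le> d" using v d_def by simp
    qed
    thus "vec.dim V = maxrk q V" using lowrk dimV d_def by simp
  next
    assume eq: "vec.dim V = maxrk q V"
    have rkle: "rk q v \<le> d" if "v \<in> V" for v using maxge[OF that] eq dimV d_def by simp
    have inF: "\<forall>i\<in>P. \<forall>j. b i $ j \<in> ?F"
    proof (rule ccontr)
      assume "\<not> (\<forall>i\<in>P. \<forall>j. b i $ j \<in> ?F)"
      then obtain i0 j0 where i0: "i0 \<in> P" and nF: "b i0 $ j0 \<notin> ?F" by blast
      have j0: "j0 \<notin> P"
      proof
        assume "j0 \<in> P"
        hence "b i0 $ j0 = 1 \<or> b i0 $ j0 = 0" using bd i0 by auto
        thus False using nF F0 F1 by auto
      qed
      have "P \<subset> UNIV" using j0 by auto
      hence "card P < CARD('n)" by (rule psubset_card_mono[rotated]) simp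
      hence dm1: "d + 1 \<le> m" using assms(4) d_def by simp
      have d1: "1 \<le> d" using i0 d_def finP by (simp add: Suc_le_eq card_gt_0_iff) blast
      define P' where "P' = P - {i0}"
      have P'fin: "finite P'" and i0P': "i0 \<notin> P'" and PP': "P = insert i0 P'"
        using i0 by (auto simp: P'_def)
      have cP': "card P' = d - 1" using i0 d_def by (simp add: P'_def)
      have "card P' \<le> m" using cP' dm by simp
      then obtain x0 where x0: "indepF P' x0" using exists_indep[OF P'fin powle finA] by blast
      define U where "U = spanF P' x0"
      define c where "c = b i0 $ j0"
      define w where "w = (\<Sum>i\<in>P'. x0 i * b i $ j0)"
      define BAD where "BAD = U \<union> (\<Union>a\<in>?F. (\<lambda>u. (u - w) / (c - a)) ` U)"
      have finU: "finite U" unfolding U_def by (rule finite_span[OF P'fin])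
      have cardU: "card U \<le> q ^ (d - 1)"
      proof -
        have "card U \<le> card ?F ^ card P'" unfolding U_def by (rule card_span_le[OF P'fin])
        also have "\<dots> \<le> q ^ (d - 1)" using cardF cP' by (simp add: power_mono)
        finally show ?thesis .
      qed
      have "card BAD \<le> card U + card (\<Union>a\<in>?F. (\<lambda>u. (u - w) / (c - a)) ` U)"
        unfolding BAD_def by (rule card_Un_le)
      also have "card (\<Union>a\<in>?F. (\<lambda>u. (u - w) / (c - a)) ` U) \<le> (\<Sum>a\<in>?F. card ((\<lambda>u. (u - w) / (c - a)) ` U))"
        by (rule card_UN_le) (rule finF)
      also have "\<dots> \<le> (\<Sum>a\<in>?F. card U)" by (intro sum_mono card_image_le finU)
      also have "\<dots> = card ?F * card U" by simp
      finally have "card BAD \<le> card U + card ?F * card U" by simp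
      also have "\<dots> \<le> q ^ (d - 1) + q * q ^ (d - 1)" using cardU cardF by (intro add_mono mult_mono) auto
      also have "\<dots> = (1 + q) * q ^ (d - 1)" by (simp add: algebra_simps)
      also have "\<dots> < (q * q) * q ^ (d - 1)"
      proof (rule mult_strict_right_mono)
        have "2 * q \<le> q * q" using q2 by (intro mult_right_mono) auto
        thus "1 + q < q * q" using q2 by linarith
      qed (use q0 in simp)
      also have "\<dots> = q ^ (d + 1)" using d1
        by (metis (no_types, lifting) Suc_diff_le add.commute diff_Suc_1 mult.assoc plus_1_eq_Suc power_Suc)
      also have "\<dots> \<le> q ^ m" using q2 dm1 by (intro power_increasing) auto
      finally have "card BAD < CARD('a)" using assms(2) by simp
      hence "BAD \<noteq> UNIV" by (metis less_irrefl)
      then obtain y where y: "y \<notin> BAD" by auto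
      hence yU: "y \<notin> U" unfolding BAD_def by auto
      define x where "x = x0(i0 := y)"
      have indx: "indepF P x" unfolding PP' x_def
        by (rule indep_insert[OF P'fin i0P' x0 yU[unfolded U_def]])
      define z where "z = c * y + w"
      have sumP: "(\<Sum>i\<in>P. f i * x i) = f i0 * y + (\<Sum>i\<in>P'. f i * x0 i)" for f
      proof -
        have "(\<Sum>i\<in>P. f i * x i) = f i0 * x i0 + (\<Sum>i\<in>P'. f i * x i)"
          unfolding PP' by (rule sum.insert[OF P'fin i0P'])
        also have "(\<Sum>i\<in>P'. f i * x i) = (\<Sum>i\<in>P'. f i * x0 i)"
          by (rule sum.cong) (use i0P' in \<open>auto simp: x_def\<close>)
        finally show ?thesis by (simp add: x_def)
      qed
      have zns: "z \<notin> spanF P x"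
      proof
        assume "z \<in> spanF P x"
        then obtain a where a: "z = (\<Sum>i\<in>P. a i * x i)" "\<forall>i\<in>P. a i \<in> ?F"
          unfolding spanF_def by blast
        define u where "u = (\<Sum>i\<in>P'. a i * x0 i)"
        have uU: "u \<in> U" unfolding U_def spanF_def u_def using a(2) PP'
          by (intro CollectI exI[of _ a] conjI) auto
        have ai0: "a i0 \<in> ?F" using a(2) i0 by blast
        have ca: "c - a i0 \<noteq> 0"
        proof
          assume "c - a i0 = 0"
          hence "c = a i0" by simp
          thus False using ai0 nF c_def by simp
        qed
        have "c * y + w = a i0 * y + u" using a(1) sumP[of a] z_def u_def by simp
        hence "(c - a i0) * y = u - w" by (simp add: algebra_simps)
        hence "y = (u - w) / (c - a i0)" using ca by (metis nonzero_mult_div_cancel_left)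
        hence "y \<in> BAD" unfolding BAD_def using uU ai0 by blast
        thus False using y by simp
      qed
      have ind2: "indepF (insert j0 P) (x(j0 := z))" by (rule indep_insert[OF finP j0 indx zns])
      let ?v = "comb x"
      have vj0: "?v $ j0 = z"
      proof -
        have "?v $ j0 = (\<Sum>i\<in>P. b i $ j0 * x i)" unfolding comb_comp by (simp add: mult.commute)
        also have "\<dots> = b i0 $ j0 * y + (\<Sum>i\<in>P'. b i $ j0 * x0 i)" by (rule sumP)
        finally show ?thesis by (simp add: z_def c_def w_def mult.commute)
      qed
      have img: "(x(j0 := z)) ` insert j0 P \<subseteq> range (\<lambda>i. ?v $ i)"
      proof
        fix a assume "a \<in> (x(j0 := z)) ` insert j0 P"
        then obtain j where j: "j \<in> insert j0 P" "a = (x(j0 := z)) j" by (rule imageE) simp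
        show "a \<in> range (\<lambda>i. ?v $ i)"
        proof (cases "j = j0")
          case True
          thus ?thesis using j vj0 by (metis fun_upd_same rangeI)
        next
          case False
          hence "j \<in> P" "a = x j" using j by auto
          hence "a = ?v $ j" using comb_piv by simp
          thus ?thesis by simp
        qed
      qed
      have "card (insert j0 P) \<le> rk q ?v" unfolding rk_def
        by (rule Fq_dim_ge[OF refl _ ind2 img finA]) simp
      moreover have "card (insert j0 P) = d + 1" using j0 finP d_def by simp
      moreover have "rk q ?v \<le> d" by (rule rkle[OF combV])
      ultimately show False by simp
    qed
    have fsum: "(\<Sum>i\<in>A. f i) ^ q = (\<Sum>i\<in>A. (f i) ^ q)" if "finite A" for A and f :: "'n \<Rightarrow> 'a"
      using that by (induction A rule: finite_induct) (auto simp: frob q0 power_0_left)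
    show "frob_closed q V"
      unfolding frob_closed_def
    proof
      fix v assume v: "v \<in> V"
      have "frob q v = comb (\<lambda>i. (v $ i) ^ q)"
      proof (subst vec_eq_iff, rule allI)
        fix j
        have "frob q v $ j = (\<Sum>i\<in>P. v $ i * b i $ j) ^ q" using coord[OF v] frob_comp by metis
        also have "\<dots> = (\<Sum>i\<in>P. (v $ i * b i $ j) ^ q)" by (rule fsum[OF finP])
        also have "\<dots> = (\<Sum>i\<in>P. (v $ i) ^ q * b i $ j)"
        proof (rule sum.cong[OF refl])
          fix i assume "i \<in> P"
          hence "(b i $ j) ^ q = b i $ j" using inF by (simp add: Fq_def)
          thus "(v $ i * b i $ j) ^ q = (v $ i) ^ q * b i $ j" by (simp add: power_mult_distrib)
        qed
        also have "\<dots> = comb (\<lambda>i. (v $ i) ^ q) $ j" by (simp add: comb_comp)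
        finally show "frob q v $ j = comb (\<lambda>i. (v $ i) ^ q) $ j" .
      qed
      thus "frob q v \<in> V" using combV by simp
    qed
  qed
qed

end
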